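(* Let $\phi$ be a Minkowski coordinate system, and suppose that $\phi'$ is an inertial coordinate system which is at rest with respect to $\phi$ and for which the isotropy of the two-way velocity of light holds. If every causality M-statement which holds true according to $\phi$ also holds true according to $\phi'$, then $\phi'$ is a Minkowski coordinate system up to a scale factor, and the $\phi$-synchrony and the $\phi'$-synchrony coincide.
   Context: Setting: Minkowski space-time modelled on $\mathbb{R}^4$ with the Lorentzian form $g$ represented in the canonical basis by $\mathrm{diag}(1,1,1,-c^2)$, $c$ the speed of light in empty space, with its standard time orientation. A Minkowski coordinate system is an affine coordinate system in which the metric takes this standard form $\mathrm{diag}(1,1,1,-c^2)$ (with the time coordinate future-oriented). An inertial coordinate system is an affine coordinate system on $\mathbb{R}^4$ whose associated basis of free vectors is of the form $(e_1,e_2,e_3,u)$, where the subspace spanned by $e_1,e_2,e_3$ is spacelike and $u$ is timelike. For an inertial coordinate system $\phi$ and events $p\neq q$, $p$ is causally M-connectible to $q$ according to $\phi$ if $\phi(q)-\phi(p)$ is a future timelike or null vector with respect to the standard Minkowski form $\mathrm{diag}(1,1,1,-c^2)$ on coordinate space; a causality M-statement is any statement that one event is causally M-connectible to another. Known fact used: for every inertial coordinate system $\phi'$ for which the two-way velocity of light is isotropic there is a unique Minkowski coordinate system $\phi$ such that the transition from $\phi$ to $\phi'$ has the form $\mathbf{r}'=\lambda\mathbf{r}$, $t'=\lambda(t+\mathbf{k}\cdot\mathbf{r})$ with $\lambda>0$, $|\mathbf{k}|<1/c$, and conversely every such $\phi'$ has isotropic two-way light speed. The $\phi$-synchrony is the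 simultaneity relation given by equal $\phi$-time coordinate. *)

theory Defs
  imports "HOL-Analysis.Analysis"
begin

text \<open>Events of Minkowski space-time and coordinate tuples are both modelled as
  elements of real^4; the fourth component is the time component.\<close>

definition mink :: "real \<Rightarrow> real^4 \<Rightarrow> real^4 \<Rightarrow> real" where
  "mink c v w = v$1 * w$1 + v$2 * w$2 + v$3 * w$3 - c\<^sup>2 * (v$4 * w$4)"

definition affine_coord :: "(real^4 \<Rightarrow> real^4) \<Rightarrow> bool" where
  "affine_coord \<phi> \<longleftrightarrow> (\<exists>L b. linear L \<and> bij L \<and> (\<forall>p. \<phi> p = L p + b))"

text \<open>The associated basis of free vectors: the i-th basis vector is the displacement
  of events corresponding to a unit step in the i-th coordinate.\<close>
definition fvec :: "(real^4 \<Rightarrow> real^4) \<Rightarrow> 4 \<Rightarrow> real^4" where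
  "fvec \<phi> i = inv \<phi> (\<phi> 0 + axis i 1) - inv \<phi> (\<phi> 0)"

definition minkowski_cs :: "real \<Rightarrow> (real^4 \<Rightarrow> real^4) \<Rightarrow> bool" where
  "minkowski_cs c \<phi> \<longleftrightarrow> affine_coord \<phi> \<and>
     (\<forall>i j. mink c (fvec \<phi> i) (fvec \<phi> j) = mink c (axis i 1) (axis j 1)) \<and>
     (fvec \<phi> 4)$4 > 0"

definition inertial_cs :: "real \<Rightarrow> (real^4 \<Rightarrow> real^4) \<Rightarrow> bool" where
  "inertial_cs c \<phi> \<longleftrightarrow> affine_coord \<phi> \<and>
     (\<forall>v\<in>span {fvec \<phi> 1, fvec \<phi> 2, fvec \<phi> 3}. v \<noteq> 0 \<longrightarrow> mink c v v > 0) \<and>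
     mink c (fvec \<phi> 4) (fvec \<phi> 4) < 0"

text \<open>phi' is at rest w.r.t. phi: the time axes (worldlines of fixed spatial
  coordinates) are parallel.\<close>
definition at_rest_wrt :: "(real^4 \<Rightarrow> real^4) \<Rightarrow> (real^4 \<Rightarrow> real^4) \<Rightarrow> bool" where
  "at_rest_wrt \<phi>' \<phi> \<longleftrightarrow> (\<exists>a. fvec \<phi>' 4 = a *\<^sub>R fvec \<phi> 4)"

definition light_signal :: "real \<Rightarrow> real^4 \<Rightarrow> real^4 \<Rightarrow> bool" where
  "light_signal c p q \<longleftrightarrow> mink c (q - p) (q - p) = 0 \<and> (q - p)$4 > 0"

text \<open>Isotropy of the two-way velocity of light in phi: a light signal emitted from
  the spatial point at rest at coordinates X, reflected at the spatial point displaced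
  by d (d spatial, nonzero), and received back at the starting spatial point after
  coordinate time T, always has two-way velocity 2|d|/T equal to c, whatever the
  direction of d.\<close>
definition iso_two_way :: "real \<Rightarrow> (real^4 \<Rightarrow> real^4) \<Rightarrow> bool" where
  "iso_two_way c \<phi> \<longleftrightarrow>
     (\<forall>X d s T. d$4 = 0 \<and> d \<noteq> 0 \<and>
        light_signal c (inv \<phi> X) (inv \<phi> (X + d + s *\<^sub>R axis 4 1)) \<and>
        light_signal c (inv \<phi> (X + d + s *\<^sub>R axis 4 1)) (inv \<phi> (X + T *\<^sub>R axis 4 1))
        \<longrightarrow> 2 * norm d / T = c)"

definition causal_M :: "real \<Rightarrow> (real^4 \<Rightarrow> real^4) \<Rightarrow> real^4 \<Rightarrow> real^4 \<Rightarrow> bool" where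
  "causal_M c \<phi> p q \<longleftrightarrow> p \<noteq> q \<and>
     mink c (\<phi> q - \<phi> p) (\<phi> q - \<phi> p) \<le> 0 \<and> (\<phi> q - \<phi> p)$4 > 0"

end

theory Submission
  imports Defs
begin

definition sq3 :: "real^4 \<Rightarrow> real" where
  "sq3 v = (v$1)\<^sup>2 + (v$2)\<^sup>2 + (v$3)\<^sup>2"

lemma sq3_nonneg: "sq3 v \<ge> 0"
  by (simp add: sq3_def)

lemma mink_sq: "mink c v v = sq3 v - c\<^sup>2 * (v$4)\<^sup>2"
  by (simp add: mink_def sq3_def power2_eq_square)

lemma mink_add_left: "mink c (u + v) w = mink c u w + mink c v w"
  by (simp add: mink_def algebra_simps)
lemma mink_add_right: "mink c w (u + v) = mink c w u + mink c w v"
  by (simp add: mink_def algebra_simps)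
lemma mink_scale_left: "mink c (a *\<^sub>R u) w = a * mink c u w"
  by (simp add: mink_def algebra_simps)
lemma mink_scale_right: "mink c w (a *\<^sub>R u) = a * mink c w u"
  by (simp add: mink_def algebra_simps)

lemma polar: "mink c u v = (mink c (u+v) (u+v) - mink c u u - mink c v v) / 2"
  by (simp add: mink_def algebra_simps power2_eq_square)

lemma decomp4: "(x::real^4) = x$1 *\<^sub>R axis 1 1 + x$2 *\<^sub>R axis 2 1 + x$3 *\<^sub>R axis 3 1 + x$4 *\<^sub>R axis 4 1"
  by (simp add: vec_eq_iff forall_4 axis_def)

lemma norm4: "norm (x::real^4) = sqrt (x$1^2 + x$2^2+x$3^2+x$4^2)"
  by (simp add: norm_vec_def L2_set_def sum_4)

lemma ax4: "(axis (4::4) (1::real)) $ 1 = 0" "(axis (4::4) (1::real)) $ 2 = 0"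
  "(axis (4::4) (1::real)) $ 3 = 0" "(axis (4::4) (1::real)) $ 4 = 1"
  by (simp_all add: axis_def)

lemma mink_iso:
  assumes l: "linear P"
    and h: "\<forall>i j. mink c (P (axis i 1)) (P (axis j 1)) = mink c (axis i 1) (axis j 1)"
  shows "mink c (P x) (P y) = mink c x y"
proof -
  have e: "\<And>z. P z = z$1 *\<^sub>R P (axis 1 1) + z$2 *\<^sub>R P (axis 2 1) + z$3 *\<^sub>R P (axis 3 1) + z$4 *\<^sub>R P (axis 4 1)"
  proof -
    fix z :: "real^4"
    have "P z = P (z$1 *\<^sub>R axis 1 1 + z$2 *\<^sub>R axis 2 1 + z$3 *\<^sub>R axis 3 1 + z$4 *\<^sub>R axis 4 1)"
      using decomp4[of z] by simp
    also have "\<dots> = z$1 *\<^sub>R P (axis 1 1) + z$2 *\<^sub>R P (axis 2 1) + z$3 *\<^sub>R P (axis 3 1) + z$4 *\<^sub>R P (axis 4 1)"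
      by (simp add: linear_add[OF l] linear_scale[OF l])
    finally show "P z = z$1 *\<^sub>R P (axis 1 1) + z$2 *\<^sub>R P (axis 2 1) + z$3 *\<^sub>R P (axis 3 1) + z$4 *\<^sub>R P (axis 4 1)" .
  qed
  show ?thesis
    apply (subst (1 2) e)
    apply (simp only: mink_add_left mink_add_right mink_scale_left mink_scale_right h)
    apply (simp add: mink_def axis_def)
    done
qed

lemma inv_affine:
  fixes L :: "real^4 \<Rightarrow> real^4"
  assumes "bij L" "\<And>p. \<phi> p = L p + b"
  shows "inv \<phi> y = inv L (y - b)"
proof -
  have "inj \<phi>"
  proof (rule injI)
    fix x y assume "\<phi> x = \<phi> y"
    hence "L x + b = L y + b" by (simp add: assms(2))
    hence "L x = L y" by simp
    thus "x = y" using assms(1) bij_is_inj injD by metis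
  qed
  moreover have "\<phi> (inv L (y - b)) = y"
    using assms by (simp add: bij_is_surj surj_f_inv_f)
  ultimately show ?thesis by (rule inv_f_eq)
qed

lemma fvec_affine:
  fixes L :: "real^4 \<Rightarrow> real^4"
  assumes "linear L" "bij L" "\<And>p. \<phi> p = L p + b"
  shows "fvec \<phi> i = inv L (axis i 1)"
proof -
  have li: "linear (inv L)" using inj_linear_imp_inv_linear[OF assms(1)] assms(2) bij_is_inj by blast
  show ?thesis
    unfolding fvec_def inv_affine[OF assms(2,3)]
    using assms(3) by (simp add: linear_0[OF assms(1)] linear_0[OF li])
qed

lemma timelike_sign:
  fixes u f :: "real^4"
  assumes c: "c > 0" and u: "mink c u u \<le> 0" and f: "mink c f f < 0" "f$4 > 0"
    and neg: "mink c u f < 0"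
  shows "u$4 > 0"
proof (rule ccontr)
  assume "\<not> u$4 > 0"
  hence u4: "u$4 \<le> 0" by simp
  define a1 where "a1 = u$1" define a2 where "a2 = u$2" define a3 where "a3 = u$3"
  define b1 where "b1 = f$1" define b2 where "b2 = f$2" define b3 where "b3 = f$3"
  have hu: "a1^2+a2^2+a3^2 \<le> c^2 * (u$4)^2" using u by (simp add: mink_def a1_def a2_def a3_def power2_eq_square)
  have hf: "b1^2+b2^2+b3^2 \<le> c^2 * (f$4)^2" using f by (simp add: mink_def b1_def b2_def b3_def power2_eq_square)
  have cs: "(a1*b1+a2*b2+a3*b3)^2 \<le> (a1^2+a2^2+a3^2)*(b1^2+b2^2+b3^2)"
  proof -
    have "0 \<le> (a1*b2-a2*b1)^2 + (a1*b3-a3*b1)^2 + (a2*b3-a3*b2)^2" by simp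
    thus ?thesis by (simp add: power2_eq_square algebra_simps)
  qed
  also have "\<dots> \<le> (c^2 * (u$4)^2) * (c^2 * (f$4)^2)"
    using hu hf by (intro mult_mono) auto
  also have "\<dots> = (c^2 * u$4 * f$4)^2" by (simp add: power2_eq_square algebra_simps)
  finally have "\<bar>a1*b1+a2*b2+a3*b3\<bar> \<le> \<bar>c^2 * u$4 * f$4\<bar>"
    using abs_le_square_iff by blast
  moreover have "c^2 * u$4 * f$4 \<le> 0"
  proof -
    have "u$4 * f$4 \<le> 0" using u4 f(2) by (simp add: mult_nonpos_nonneg)
    then have "c^2 * (u$4*f$4) \<le> 0" by (simp add: mult_nonneg_nonpos)
    then show ?thesis by (simp add: mult.assoc)
  qed
  ultimately have "a1*b1+a2*b2+a3*b3 - c^2 * (u$4 * f$4) \<ge> 0" by (simp add: algebra_simps)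
  moreover have "mink c u f = a1*b1+a2*b2+a3*b3 - c^2 * (u$4 * f$4)"
    by (simp add: mink_def a1_def a2_def a3_def b1_def b2_def b3_def)
  ultimately show False using neg by simp
qed

lemma orient:
  assumes c: "c > 0" and l: "linear P"
    and iso: "\<And>x y. mink c (P x) (P y) = mink c x y"
    and pe: "(P (axis 4 1))$4 > 0"
    and w: "mink c w w \<le> 0" "w$4 > 0"
  shows "(P w)$4 > 0"
proof (rule timelike_sign[OF c])
  show "mink c (P w) (P w) \<le> 0" using iso w by simp
  show "mink c (P (axis 4 1)) (P (axis 4 1)) < 0" unfolding iso using c
    by (simp add: mink_def axis_def)
  show "(P (axis 4 1))$4 > 0" by fact
  show "mink c (P w) (P (axis 4 1)) < 0" unfolding iso using c w(2)
    by (simp add: mink_def axis_def)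
qed

theorem theorem3p15:
  fixes c :: real and \<phi> \<phi>' :: "real^4 \<Rightarrow> real^4"
  assumes "c > 0"
    and "minkowski_cs c \<phi>"
    and "inertial_cs c \<phi>'"
    and "at_rest_wrt \<phi>' \<phi>"
    and "iso_two_way c \<phi>'"
    and "\<forall>p q. causal_M c \<phi> p q \<longrightarrow> causal_M c \<phi>' p q"
  shows "(\<exists>a>0. minkowski_cs c (\<lambda>p. a *\<^sub>R \<phi>' p)) \<and>
         (\<forall>p q. (\<phi> p)$4 = (\<phi> q)$4 \<longleftrightarrow> (\<phi>' p)$4 = (\<phi>' q)$4)"
proof -
  note c = assms(1)
  from assms(2) obtain L b where L: "linear L" "bij L" "\<And>p. \<phi> p = L p + b"
    unfolding minkowski_cs_def affine_coord_def by blast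
  from assms(3) obtain L' b' where L': "linear L'" "bij L'" "\<And>p. \<phi>' p = L' p + b'"
    unfolding inertial_cs_def affine_coord_def by blast
  define P where "P = inv L"
  define P' where "P' = inv L'"
  have PL: "\<And>x. L (P x) = x" "\<And>x. P (L x) = x"
    unfolding P_def using L(2) by (simp_all add: bij_is_surj surj_f_inv_f bij_is_inj inv_f_f)
  have PL': "\<And>x. L' (P' x) = x" "\<And>x. P' (L' x) = x"
    unfolding P'_def using L'(2) by (simp_all add: bij_is_surj surj_f_inv_f bij_is_inj inv_f_f)
  have linP: "linear P" unfolding P_def using inj_linear_imp_inv_linear[OF L(1)] L(2) bij_is_inj by blast
  have linP': "linear P'" unfolding P'_def using inj_linear_imp_inv_linear[OF L'(1)] L'(2) bij_is_inj by blast
  have injP': "inj P'"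
  proof (rule injI)
    fix x y assume "P' x = P' y"
    hence "L' (P' x) = L' (P' y)" by simp
    thus "x = y" by (simp add: PL')
  qed
  have fv: "\<And>i. fvec \<phi> i = P (axis i 1)" unfolding P_def by (rule fvec_affine[OF L])
  have fv': "\<And>i. fvec \<phi>' i = P' (axis i 1)" unfolding P'_def by (rule fvec_affine[OF L'])
  have isoP: "\<And>x y. mink c (P x) (P y) = mink c x y"
    by (rule mink_iso[OF linP]) (use assms(2) in \<open>simp add: minkowski_cs_def fv\<close>)
  have pe: "(P (axis 4 1))$4 > 0" using assms(2) by (simp add: minkowski_cs_def fv)
  have ori: "\<And>w. mink c w w \<le> 0 \<Longrightarrow> w$4 > 0 \<Longrightarrow> (P w)$4 > 0"
    by (rule orient[OF c linP isoP pe])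
  define N where "N = (\<lambda>x. L (P' x))"
  have linN: "linear N" unfolding N_def using linear_compose[OF linP' L(1)] by (simp add: o_def)
  have injN: "inj N"
  proof (rule injI)
    fix x y assume "N x = N y"
    hence "P (L (P' x)) = P (L (P' y))" unfolding N_def by simp
    hence "L' (P' x) = L' (P' y)" by (simp add: PL)
    thus "x = y" by (simp add: PL')
  qed
  have PN: "\<And>x. P' x = P (N x)" unfolding N_def by (simp add: PL)
  have isoP': "\<And>x y. mink c (P' x) (P' y) = mink c (N x) (N y)" by (simp add: PN isoP)
  from assms(4) obtain \<alpha> where "fvec \<phi>' 4 = \<alpha> *\<^sub>R fvec \<phi> 4" unfolding at_rest_wrt_def by blast
  hence "P' (axis 4 1) = \<alpha> *\<^sub>R P (axis 4 1)" by (simp add: fv fv')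
  hence Ne4: "N (axis 4 1) = \<alpha> *\<^sub>R axis 4 1" unfolding N_def by (simp add: linear_scale[OF L(1)] PL)
  have a0: "\<alpha> \<noteq> 0"
  proof
    assume "\<alpha> = 0"
    hence "N (axis 4 1) = N 0" using Ne4 linear_0[OF linN] by simp
    hence "axis 4 1 = (0::real^4)" using injN by (simp add: inj_eq)
    thus False by (simp add: axis_eq_0_iff)
  qed
  have Nsplit: "\<And>x. N x = N (x - x$4 *\<^sub>R axis 4 1) + (x$4 * \<alpha>) *\<^sub>R axis 4 1"
  proof -
    fix x :: "real^4"
    have "N x = N ((x - x$4 *\<^sub>R axis 4 1) + x$4 *\<^sub>R axis 4 1)" by simp
    also have "\<dots> = N (x - x$4 *\<^sub>R axis 4 1) + (x$4 * \<alpha>) *\<^sub>R axis 4 1"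
      by (simp only: linear_add[OF linN] linear_scale[OF linN] Ne4 scaleR_scaleR)
    finally show "N x = N (x - x$4 *\<^sub>R axis 4 1) + (x$4 * \<alpha>) *\<^sub>R axis 4 1" .
  qed
  have spat: "\<And>d. d$4 = 0 \<Longrightarrow> d \<noteq> 0 \<Longrightarrow> mink c (N d) (N d) > 0"
  proof -
    fix d :: "real^4" assume d: "d$4 = 0" "d \<noteq> 0"
    have "P' d = P' (d$1 *\<^sub>R axis 1 1 + d$2 *\<^sub>R axis 2 1 + d$3 *\<^sub>R axis 3 1)"
      using decomp4[of d] d(1) by simp
    also have "\<dots> = d$1 *\<^sub>R fvec \<phi>' 1 + d$2 *\<^sub>R fvec \<phi>' 2 + d$3 *\<^sub>R fvec \<phi>' 3"
      by (simp add: linear_add[OF linP'] linear_scale[OF linP'] fv')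
    finally have "P' d \<in> span {fvec \<phi>' 1, fvec \<phi>' 2, fvec \<phi>' 3}"
      by (simp add: span_add span_scale span_base)
    moreover have "P' d \<noteq> 0" using d(2) injP' linear_0[OF linP'] by (metis injD)
    ultimately have "mink c (P' d) (P' d) > 0" using assms(3) unfolding inertial_cs_def by blast
    thus "mink c (N d) (N d) > 0" by (simp add: isoP')
  qed
  have invphi': "\<And>y. inv \<phi>' y = P' (y - b')" unfolding P'_def by (rule inv_affine[OF L'(2,3)])
  have sq3N: "\<And>x. sq3 (N x) = sq3 (N (x - x$4 *\<^sub>R axis 4 1))"
    by (subst Nsplit) (simp add: sq3_def axis_def)
  have N4: "\<And>x. (N x)$4 = (N (x - x$4 *\<^sub>R axis 4 1))$4 + x$4 * \<alpha>"
    by (subst Nsplit) (simp add: axis_def)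
  have isoA: "\<And>d. d$4 = 0 \<Longrightarrow> d \<noteq> 0 \<Longrightarrow> \<alpha> > 0 \<and> sq3 (N d) = \<alpha>\<^sup>2 * sq3 d"
  proof -
    fix d :: "real^4" assume d: "d$4 = 0" "d \<noteq> 0"
    define \<beta> where "\<beta> = (N d)$4"
    have "sq3 (N d) > 0"
      using spat[OF d] unfolding mink_sq by (smt (verit) c zero_le_power2 mult_nonneg_nonneg)
    define r where "r = sqrt (sq3 (N d))"
    have r0: "r > 0" and r2: "r\<^sup>2 = sq3 (N d)" using \<open>sq3 (N d) > 0\<close> by (simp_all add: r_def)
    define s where "s = (r/c - \<beta>)/\<alpha>"
    define T where "T = s + (r/c + \<beta>)/\<alpha>"
    define v1 where "v1 = d + s *\<^sub>R axis 4 1"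
    define v2 where "v2 = (T - s) *\<^sub>R axis 4 1 - d"
    have Nv1: "N v1 = N d + (s*\<alpha>) *\<^sub>R axis 4 1" unfolding v1_def
      by (simp add: linear_add[OF linN] linear_scale[OF linN] Ne4)
    have Nv2: "N v2 = ((T-s)*\<alpha>) *\<^sub>R axis 4 1 - N d" unfolding v2_def
      by (simp add: linear_diff[OF linN] linear_scale[OF linN] Ne4)
    have Nv1_4: "(N v1)$4 = r/c" using a0 by (simp add: Nv1 axis_def \<beta>_def[symmetric] s_def field_simps)
    have Nv2_4: "(N v2)$4 = r/c" using a0 by (simp add: Nv2 axis_def \<beta>_def[symmetric] s_def T_def field_simps)
    have sq1: "sq3 (N v1) = sq3 (N d)" by (simp add: Nv1 sq3_def axis_def)
    have sq2: "sq3 (N v2) = sq3 (N d)" by (simp add: Nv2 sq3_def axis_def power2_eq_square)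
    have m1: "mink c (N v1) (N v1) = 0" using c by (simp add: mink_sq sq1 Nv1_4 r2[symmetric] power_divide)
    have m2: "mink c (N v2) (N v2) = 0" using c by (simp add: mink_sq sq2 Nv2_4 r2[symmetric] power_divide)
    have ls1: "light_signal c (inv \<phi>' 0) (inv \<phi>' (0 + d + s *\<^sub>R axis 4 1))"
    proof -
      have e: "inv \<phi>' (0 + d + s *\<^sub>R axis 4 1) - inv \<phi>' 0 = P' v1"
        by (simp add: invphi' v1_def linear_diff[OF linP'] linear_add[OF linP'] linear_neg[OF linP'])
      show ?thesis unfolding light_signal_def e
        using m1 ori[of "N v1"] Nv1_4 r0 c by (simp add: PN isoP)
    qed
    have ls2: "light_signal c (inv \<phi>' (0 + d + s *\<^sub>R axis 4 1)) (inv \<phi>' (0 + T *\<^sub>R axis 4 1))"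
    proof -
      have e: "inv \<phi>' (0 + T *\<^sub>R axis 4 1) - inv \<phi>' (0 + d + s *\<^sub>R axis 4 1) = P' v2"
        by (simp add: invphi' v2_def linear_diff[OF linP'] linear_add[OF linP'] linear_scale[OF linP'] algebra_simps)
      show ?thesis unfolding light_signal_def e
        using m2 ori[of "N v2"] Nv2_4 r0 c by (simp add: PN isoP)
    qed
    have "2 * norm d / T = c"
      using assms(5) d ls1 ls2 unfolding iso_two_way_def by blast
    moreover have "T = 2 * r / (c * \<alpha>)" using a0 c by (simp add: T_def s_def field_simps)
    ultimately have "2 * norm d * (c * \<alpha>) / (2 * r) = c" by simp
    hence nd: "norm d * \<alpha> = r" using c r0 by (simp add: field_simps)
    have nd0: "norm d > 0" using d by simp
    have ap: "\<alpha> > 0" using nd r0 nd0 zero_less_mult_iff[of "norm d" \<alpha>] by linarith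
    have "norm d = sqrt (sq3 d)" using d by (simp add: norm4 sq3_def)
    hence "sq3 d = (norm d)\<^sup>2" using sq3_nonneg by simp
    hence "sq3 (N d) = (norm d * \<alpha>)\<^sup>2" using nd r2 by simp
    hence "sq3 (N d) = \<alpha>\<^sup>2 * sq3 d" using \<open>sq3 d = (norm d)\<^sup>2\<close> by (simp add: power_mult_distrib)
    with ap show "\<alpha> > 0 \<and> sq3 (N d) = \<alpha>\<^sup>2 * sq3 d" by simp
  qed
  have apos: "\<alpha> > 0"
  proof -
    have "(axis 1 1 :: real^4)$4 = 0" by (simp add: axis_def)
    moreover have "(axis 1 1 :: real^4) \<noteq> 0" by (simp add: axis_eq_0_iff)
    ultimately show ?thesis using isoA by blast
  qed
  have isoA': "\<And>d. d$4 = 0 \<Longrightarrow> sq3 (N d) = \<alpha>\<^sup>2 * sq3 d"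
  proof -
    fix d :: "real^4" assume d4: "d$4 = 0"
    show "sq3 (N d) = \<alpha>\<^sup>2 * sq3 d"
    proof (cases "d = 0")
      case True thus ?thesis by (simp add: linear_0[OF linN] sq3_def)
    next
      case False thus ?thesis using isoA d4 by blast
    qed
  qed
  have ell: "\<And>d. d$4 = 0 \<Longrightarrow> (N d)$4 = 0"
  proof (rule ccontr)
    fix d :: "real^4" assume d: "d$4 = 0" and b: "(N d)$4 \<noteq> 0"
    define \<beta> where "\<beta> = (N d)$4"
    define d' where "d' = sgn \<beta> *\<^sub>R d"
    have d'4: "d'$4 = 0" using d by (simp add: d'_def)
    have Nd'4: "(N d')$4 = \<bar>\<beta>\<bar>"
      by (simp add: d'_def linear_scale[OF linN] \<beta>_def[symmetric] sgn_if)
    have bpos: "\<bar>\<beta>\<bar> > 0" using b \<beta>_def by simp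
    have d'0: "d' \<noteq> 0" using Nd'4 bpos linear_0[OF linN] by auto
    have sqd: "sq3 (N d') = \<alpha>\<^sup>2 * sq3 d'" using isoA'[OF d'4] .
    define n where "n = sqrt (sq3 d')"
    have "norm d' = n" using d'4 by (simp add: norm4 n_def sq3_def)
    hence n0: "n > 0" using d'0 zero_less_norm_iff[of d'] by simp
    have n2: "n\<^sup>2 = sq3 d'" using sq3_nonneg n_def by simp
    define t where "t = n/c - \<bar>\<beta>\<bar>/\<alpha>"
    define y where "y = d' + t *\<^sub>R axis 4 1"
    have Ny: "N y = N d' + (t*\<alpha>) *\<^sub>R axis 4 1" unfolding y_def
      by (simp add: linear_add[OF linN] linear_scale[OF linN] Ne4)
    have Ny4: "(N y)$4 = \<alpha> * n / c" using apos c
      by (simp add: Ny axis_def Nd'4 t_def field_simps)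
    have sqy: "sq3 (N y) = \<alpha>\<^sup>2 * n\<^sup>2" by (simp add: Ny sq3_def axis_def sqd[unfolded sq3_def] n2[unfolded sq3_def])
    have mNy: "mink c (N y) (N y) \<le> 0" using c
      by (simp add: mink_sq sqy Ny4 power_divide power_mult_distrib)
    have Ny4p: "(N y)$4 > 0" using Ny4 apos n0 c by simp
    have "P' y \<noteq> P' 0"
    proof
      assume "P' y = P' 0"
      hence "y = 0" using injP' by (simp add: inj_eq)
      thus False using Ny4p linear_0[OF linN] by simp
    qed
    moreover have "L (P' y) = N y" by (simp add: N_def)
    ultimately have "causal_M c \<phi> (P' 0) (P' y)"
      unfolding causal_M_def using mNy Ny4p
      by (simp add: L(3) linear_0[OF linP'] linear_0[OF L(1)])
    hence "causal_M c \<phi>' (P' 0) (P' y)" using assms(6) by blast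
    hence my: "mink c y y \<le> 0" and y4: "y$4 > 0"
      unfolding causal_M_def by (simp_all add: L'(3) PL' linear_0[OF linP'] linear_0[OF L'(1)])
    have "t > 0" using y4 by (simp add: y_def axis_def d'4)
    have "sq3 y = n\<^sup>2" by (simp add: y_def sq3_def axis_def n2)
    hence "n\<^sup>2 \<le> c\<^sup>2 * t\<^sup>2" using my by (simp add: mink_sq y_def axis_def d'4)
    hence "n \<le> c * t" using \<open>t > 0\<close> c n0
      by (metis abs_of_pos abs_le_square_iff power_mult_distrib mult_pos_pos)
    moreover have "c * t < n" using c apos bpos by (simp add: t_def field_simps)
    ultimately show False by simp
  qed
  have isoN: "\<And>x. mink c (N x) (N x) = \<alpha>\<^sup>2 * mink c x x"
  proof -
    fix x :: "real^4"
    define d where "d = x - x$4 *\<^sub>R axis 4 1"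
    have d4: "d$4 = 0" by (simp add: d_def axis_def)
    have "sq3 (N x) = \<alpha>\<^sup>2 * sq3 d" using sq3N[of x] isoA'[OF d4] by (simp add: d_def)
    moreover have "sq3 d = sq3 x" by (simp add: d_def sq3_def axis_def)
    moreover have "(N x)$4 = x$4 * \<alpha>" using N4[of x] ell[OF d4] by (simp add: d_def)
    ultimately show "mink c (N x) (N x) = \<alpha>\<^sup>2 * mink c x x"
      by (simp add: mink_sq algebra_simps power_mult_distrib)
  qed
  have isoN2: "\<And>x y. mink c (N x) (N y) = \<alpha>\<^sup>2 * mink c x y"
  proof -
    fix x y :: "real^4"
    have "mink c (N x) (N y) = (mink c (N (x+y)) (N (x+y)) - mink c (N x) (N x) - mink c (N y) (N y)) / 2"
      by (subst polar) (simp add: linear_add[OF linN])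
    also have "\<dots> = \<alpha>\<^sup>2 * ((mink c (x+y) (x+y) - mink c x x - mink c y y) / 2)"
      by (simp add: isoN algebra_simps)
    also have "\<dots> = \<alpha>\<^sup>2 * mink c x y" by (simp add: polar[symmetric])
    finally show "mink c (N x) (N y) = \<alpha>\<^sup>2 * mink c x y" .
  qed
  define L'' where "L'' = (\<lambda>p. \<alpha> *\<^sub>R L' p)"
  have linL'': "linear L''" unfolding L''_def
    using linear_compose[OF L'(1) linear_scaleR[of \<alpha>]] by (simp add: o_def)
  have L''inv: "\<And>y. L'' ((1/\<alpha>) *\<^sub>R P' y) = y"
    unfolding L''_def using a0 by (simp add: linear_scale[OF L'(1)] PL')
  have injL'': "inj L''"
  proof (rule injI)
    fix x y assume "L'' x = L'' y"
    hence "L' x = L' y" using a0 by (simp add: L''_def)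
    thus "x = y" by (metis PL'(2))
  qed
  have "surj L''"
  proof -
    { fix y have "y = L'' ((1/\<alpha>) *\<^sub>R P' y)" using L''inv by simp }
    thus ?thesis unfolding surj_def by blast
  qed
  hence bijL'': "bij L''" unfolding bij_def using injL'' by blast
  have phi'': "\<And>p. \<alpha> *\<^sub>R \<phi>' p = L'' p + \<alpha> *\<^sub>R b'" by (simp add: L'(3) L''_def scaleR_add_right)
  have invL'': "\<And>y. inv L'' y = (1/\<alpha>) *\<^sub>R P' y" by (rule inv_f_eq[OF injL'' L''inv])
  have fv'': "\<And>i. fvec (\<lambda>p. \<alpha> *\<^sub>R \<phi>' p) i = (1/\<alpha>) *\<^sub>R P' (axis i 1)"
    using fvec_affine[OF linL'' bijL'' phi''] invL'' by simp
  have P'e4: "P' (axis 4 1) = \<alpha> *\<^sub>R P (axis 4 1)" by (simp add: PN Ne4 linear_scale[OF linP])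
  have mcs: "minkowski_cs c (\<lambda>p. \<alpha> *\<^sub>R \<phi>' p)"
    unfolding minkowski_cs_def
  proof (intro conjI allI)
    show "affine_coord (\<lambda>p. \<alpha> *\<^sub>R \<phi>' p)" unfolding affine_coord_def
      using linL'' bijL'' phi'' by blast
    fix i j :: 4
    show "mink c (fvec (\<lambda>p. \<alpha> *\<^sub>R \<phi>' p) i) (fvec (\<lambda>p. \<alpha> *\<^sub>R \<phi>' p) j) = mink c (axis i 1) (axis j 1)"
      using a0 by (simp add: fv'' mink_scale_left mink_scale_right isoP' isoN2 power2_eq_square)
  next
    show "(fvec (\<lambda>p. \<alpha> *\<^sub>R \<phi>' p) 4)$4 > 0"
      using a0 pe by (simp add: fv'' P'e4)
  qed
  have sync: "\<forall>p q. (\<phi> p)$4 = (\<phi> q)$4 \<longleftrightarrow> (\<phi>' p)$4 = (\<phi>' q)$4"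
  proof (intro allI)
    fix p q
    define y where "y = L' (p - q)"
    have e1: "(\<phi> p)$4 - (\<phi> q)$4 = (N y)$4"
      by (simp add: L(3) linear_diff[OF L(1)] N_def y_def PL')
    have e2: "(\<phi>' p)$4 - (\<phi>' q)$4 = y$4"
      by (simp add: L'(3) y_def linear_diff[OF L'(1)])
    have e3: "(N y)$4 = y$4 * \<alpha>"
      using N4[of y] ell[of "y - y$4 *\<^sub>R axis 4 1"] by (simp add: axis_def)
    show "(\<phi> p)$4 = (\<phi> q)$4 \<longleftrightarrow> (\<phi>' p)$4 = (\<phi>' q)$4"
    proof -
      have "(\<phi> p)$4 = (\<phi> q)$4 \<longleftrightarrow> (N y)$4 = 0" using e1 by linarith
      moreover have "(\<phi>' p)$4 = (\<phi>' q)$4 \<longleftrightarrow> y$4 = 0" using e2 by linarith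
      moreover have "(N y)$4 = 0 \<longleftrightarrow> y$4 = 0" using e3 a0 by simp
      ultimately show ?thesis by blast
    qed
  qed
  show ?thesis using mcs sync apos by blast
qed

end
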